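(* Let $n\ge1$ and let $(A_1,\dots,A_n)$ be a sequence of words from $\mathsf{W}_\omega$. Then there exists a unique $n$-bounded index collection $(s_1,\dots,s_m)$ that is maximal for $(A_1,\dots,A_n)$, and $m,s_1,\dots,s_m$ are determined by the following equations on $m,s_0,s_1,\dots$: $s_0=0$; if $s_k\neq n$ then $s_{k+1}=\min\{f\mid s_k<f\le n,\ \forall l\,(s_k<l\le n\to A_l\precsim A_f)\}$; if $s_k=n$ then $s_{k+1}=n$; and $m=\min\{f\ge1\mid s_f=n\}$.
   Context: Words are finite strings over $\mathbb{N}$; $\mathsf{W}_\omega$ is the set of all words, $\Lambda$ the empty word. For $k\in\mathbb{N}$, $\mathsf{S}_k$ is the set of words all of whose symbols are $\ge k$. Given a linear preorder $\precsim$ with $A\sim B$ iff $A\precsim B\wedge B\precsim A$ and $A\prec B$ iff $A\precsim B\wedge\neg B\precsim A$, a finite sequence $(A_1,\dots,A_p)$ is lexicographically not greater than $(B_1,\dots,B_q)$ iff either $p\le q$ and $A_i\sim B_i$ for all $i\le p$, or there is $s<\min(p,q)$ with $A_i\sim B_i$ for $i\le s$ and $A_{s+1}\prec B_{s+1}$. A lexicographically maximal subsequence of a finite sequence is a subsequence that is lexicographically not less than every subsequence. The linear preorder $\precsim$ on $\mathsf{W}_\omega$ is defined by recursion on (largest symbol of $AB$) $-$ (smallest symbol of $AB$): $\Lambda\precsim\Lambda$; if $AB$ is nonempty with minimal symbol $n$, write uniquely $A=A_1n\cdots nA_k$, $B=B_1n\cdots nB_l$ ($k,l\ge1$) with $A_i,B_j\in\mathsf{S}_{n+1}$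 (possibly empty); let $C,D$ be lexicographically maximal subsequences of $(A_1,\dots,A_k)$, $(B_1,\dots,B_l)$; then $A\precsim B$ iff $C$ is lexicographically not greater than $D$. An index collection is a strictly increasing finite sequence of positive integers; it is $n$-bounded if all its entries are $\le n$. An $n$-bounded index collection $(s_1,\dots,s_m)$ is maximal for $(A_1,\dots,A_n)$ if $(A_{s_1},\dots,A_{s_m})$ is a lexicographically maximal subsequence of $(A_1,\dots,A_n)$. *)

theory Defs
  imports Main "HOL-Library.Sublist"
begin

text \<open>Words are finite strings over nat, i.e. values of type nat list.\<close>

definition psim :: "('a \<Rightarrow> 'a \<Rightarrow> bool) \<Rightarrow> 'a \<Rightarrow> 'a \<Rightarrow> bool" where
  "psim R a b \<longleftrightarrow> R a b \<and> R b a"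

definition pless :: "('a \<Rightarrow> 'a \<Rightarrow> bool) \<Rightarrow> 'a \<Rightarrow> 'a \<Rightarrow> bool" where
  "pless R a b \<longleftrightarrow> R a b \<and> \<not> R b a"

text \<open>X is lexicographically not greater than Y (0-indexed transcription).\<close>
definition lexle :: "('a \<Rightarrow> 'a \<Rightarrow> bool) \<Rightarrow> 'a list \<Rightarrow> 'a list \<Rightarrow> bool" where
  "lexle R X Y \<longleftrightarrow>
     (length X \<le> length Y \<and> (\<forall>i<length X. psim R (X ! i) (Y ! i))) \<or>
     (\<exists>s < min (length X) (length Y). (\<forall>i<s. psim R (X ! i) (Y ! i)) \<and> pless R (X ! s) (Y ! s))"

definition lexmax :: "('a \<Rightarrow> 'a \<Rightarrow> bool) \<Rightarrow> 'a list \<Rightarrow> 'a list \<Rightarrow> bool" where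
  "lexmax R C Xs \<longleftrightarrow> subseq C Xs \<and> (\<forall>D. subseq D Xs \<longrightarrow> lexle R D C)"

fun splitw :: "nat \<Rightarrow> nat list \<Rightarrow> nat list list" where
  "splitw n [] = [[]]"
| "splitw n (x # xs) =
     (if x = n then [] # splitw n xs
      else (case splitw n xs of [] \<Rightarrow> [[x]] | y # ys \<Rightarrow> (x # y) # ys))"

definition wrange :: "nat list \<Rightarrow> nat" where
  "wrange W = (if W = [] then 0 else Max (set W) - Min (set W))"

text \<open>The recursion on the range, implemented with a fuel parameter. Starting with fuel
  Suc (wrange (A @ B)), every recursive call has fuel exceeding the range of its arguments,
  except calls at fuel 0, which only happen on empty words (where the answer is True).\<close>
fun wle_aux :: "nat \<Rightarrow> nat list \<Rightarrow> nat list \<Rightarrow> bool" where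
  "wle_aux 0 A B = True"
| "wle_aux (Suc d) A B =
     (if A @ B = [] then True
      else (let n = Min (set (A @ B)) in
            \<exists>C D. lexmax (wle_aux d) C (splitw n A) \<and> lexmax (wle_aux d) D (splitw n B)
                  \<and> lexle (wle_aux d) C D))"

definition wle :: "nat list \<Rightarrow> nat list \<Rightarrow> bool" where
  "wle A B = wle_aux (Suc (wrange (A @ B))) A B"

definition bounded_index_coll :: "nat \<Rightarrow> nat list \<Rightarrow> bool" where
  "bounded_index_coll n s \<longleftrightarrow> sorted_wrt (<) s \<and> (\<forall>x\<in>set s. 1 \<le> x \<and> x \<le> n)"

definition maximal_for :: "nat \<Rightarrow> (nat \<Rightarrow> nat list) \<Rightarrow> nat list \<Rightarrow> bool" where
  "maximal_for n A s \<longleftrightarrow> bounded_index_coll n s \<and>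
     lexmax wle (map A s) (map A [1..<Suc n])"

end

theory Submission
  imports Defs
begin

fun lx :: "('a\<Rightarrow>'a\<Rightarrow>bool) \<Rightarrow> 'a list \<Rightarrow> 'a list \<Rightarrow> bool" where
  "lx R [] Y = True"
| "lx R (x#X) [] = False"
| "lx R (x#X) (y#Y) = (pless R x y \<or> (psim R x y \<and> lx R X Y))"

lemma lexle_lx: "lexle R X Y = lx R X Y"
proof (induction X arbitrary: Y)
  case Nil
  then show ?case by (simp add: lexle_def)
next
  case (Cons x X)
  show ?case
  proof (cases Y)
    case Nil
    then show ?thesis by (simp add: lexle_def)
  next
    case (Cons y Y')
    have "lexle R (x#X) (y#Y') = (pless R x y \<or> (psim R x y \<and> lexle R X Y'))"
      unfolding lexle_def
      apply (simp add: All_less_Suc2 Ex_less_Suc2 del: min_Suc_Suc)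
      apply (auto simp: pless_def psim_def)
      done
    then show ?thesis using Cons.IH Cons by simp
  qed
qed


definition tp :: "('a\<Rightarrow>'a\<Rightarrow>bool) \<Rightarrow> bool" where
  "tp R \<longleftrightarrow> (\<forall>x y z. R x y \<longrightarrow> R y z \<longrightarrow> R x z) \<and> (\<forall>x y. R x y \<or> R y x)"

lemma tp_refl: "tp R \<Longrightarrow> R x x" unfolding tp_def by blast
lemma tp_trans: "tp R \<Longrightarrow> R x y \<Longrightarrow> R y z \<Longrightarrow> R x z" unfolding tp_def by blast
lemma tp_total: "tp R \<Longrightarrow> R x y \<or> R y x" unfolding tp_def by blast

lemma lx_total: "tp R \<Longrightarrow> lx R X Y \<or> lx R Y X"
proof (induction X arbitrary: Y)
  case Nil then show ?case by simp
next
  case (Cons x X)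
  then show ?case
    by (cases Y) (auto simp: pless_def psim_def dest: tp_total[of R x])
qed

lemma lx_trans: "tp R \<Longrightarrow> lx R X Y \<Longrightarrow> lx R Y Z \<Longrightarrow> lx R X Z"
proof (induction X arbitrary: Y Z)
  case Nil then show ?case by simp
next
  case (Cons x X)
  then obtain y Y' where Y: "Y = y # Y'" by (cases Y) auto
  with Cons obtain z Z' where Z: "Z = z # Z'" by (cases Z) auto
  show ?case using Cons.prems Cons.IH[of Y' Z'] unfolding Y Z
    by (auto simp: pless_def psim_def dest: tp_trans[OF Cons.prems(1)])
qed

lemma lx_refl: "tp R \<Longrightarrow> lx R X X"
  using lx_total by blast

lemma fin_max: assumes tp: "tp R" and "finite S" "S \<noteq> {}" shows "\<exists>m\<in>S. \<forall>x\<in>S. R x m"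
  using assms(2,3)
proof (induction S rule: finite_ne_induct)
  case (singleton x) then show ?case using tp by (auto intro: tp_refl)
next
  case (insert x F)
  then obtain m where m: "m \<in> F" "\<forall>y\<in>F. R y m" by blast
  show ?case
  proof (cases "R x m")
    case True then show ?thesis using m by auto
  next
    case False
    then have "R m x" using tp_total[OF tp] by blast
    then show ?thesis using m tp_trans[OF tp] tp_refl[OF tp] by blast
  qed
qed

lemma lexmax_ex: "tp R \<Longrightarrow> \<exists>C. lexmax R C Xs"
proof -
  assume tp: "tp R"
  have "tp (lx R)" using lx_total[OF tp] lx_trans[OF tp] unfolding tp_def by blast
  moreover have "finite {D. subseq D Xs}" using set_subseqs_eq[of Xs] by (metis List.finite_set)
  moreover have "{D. subseq D Xs} \<noteq> {}" by auto
  ultimately obtain m where "m \<in> {D. subseq D Xs}" "\<forall>x\<in>{D. subseq D Xs}. lx R x m"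
    using fin_max by blast
  then show ?thesis unfolding lexmax_def lexle_lx by blast
qed

definition extc :: "('a\<Rightarrow>'a\<Rightarrow>bool) \<Rightarrow> ('b \<Rightarrow> 'a list) \<Rightarrow> 'b \<Rightarrow> 'b \<Rightarrow> bool" where
  "extc R F a b \<longleftrightarrow> (\<exists>C D. lexmax R C (F a) \<and> lexmax R D (F b) \<and> lexle R C D)"

lemma tp_ext: "tp R \<Longrightarrow> tp (extc R F)"
proof -
  assume tp: "tp R"
  have tr: "extc R F a c" if ab: "extc R F a b" and bc: "extc R F b c" for a b c
  proof -
    obtain C1 D1 where 1: "lexmax R C1 (F a)" "lexmax R D1 (F b)" "lx R C1 D1"
      using ab unfolding extc_def lexle_lx by blast
    obtain D2 E2 where 2: "lexmax R D2 (F b)" "lexmax R E2 (F c)" "lx R D2 E2"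
      using bc unfolding extc_def lexle_lx by blast
    have "lx R D1 D2" using 1(2) 2(1) unfolding lexmax_def lexle_lx by blast
    then have "lx R C1 E2" using 1(3) 2(3) lx_trans[OF tp] by blast
    then show ?thesis using 1 2 unfolding extc_def lexle_lx by blast
  qed
  have to: "extc R F a b \<or> extc R F b a" for a b
  proof -
    obtain C where "lexmax R C (F a)" using lexmax_ex[OF tp] by blast
    moreover obtain D where "lexmax R D (F b)" using lexmax_ex[OF tp] by blast
    ultimately show ?thesis unfolding extc_def lexle_lx using lx_total[OF tp] by blast
  qed
  show ?thesis unfolding tp_def using tr to by blast
qed

lemma subseq_set: "subseq C Xs \<Longrightarrow> set C \<subseteq> set Xs"
  by (metis set_nths_subset subseq_conv_nths)

lemma lx_cong: "(\<forall>x\<in>S. \<forall>y\<in>S. R x y = R' x y) \<Longrightarrow> set X \<subseteq> S \<Longrightarrow> set Y \<subseteq> S \<Longrightarrow> lx R X Y = lx R' X Y"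
proof (induction X arbitrary: Y)
  case Nil then show ?case by simp
next
  case (Cons x X)
  then show ?case by (cases Y) (auto simp: pless_def psim_def)
qed

lemma lexmax_cong: "(\<forall>x\<in>S. \<forall>y\<in>S. R x y = R' x y) \<Longrightarrow> set Xs \<subseteq> S \<Longrightarrow> lexmax R C Xs = lexmax R' C Xs"
proof -
  assume a: "\<forall>x\<in>S. \<forall>y\<in>S. R x y = R' x y" "set Xs \<subseteq> S"
  have "lx R D C = lx R' D C" if "subseq D Xs" "subseq C Xs" for D
  proof (rule lx_cong[OF a(1)])
    show "set D \<subseteq> S" using subseq_set[OF that(1)] a(2) by blast
    show "set C \<subseteq> S" using subseq_set[OF that(2)] a(2) by blast
  qed
  then show ?thesis unfolding lexmax_def lexle_lx by blast
qed

lemma ext_cong: "(\<forall>x\<in>S. \<forall>y\<in>S. R x y = R' x y) \<Longrightarrow> set (F a) \<subseteq> S \<Longrightarrow> set (F b) \<subseteq> S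
  \<Longrightarrow> extc R F a b = extc R' F a b"
proof -
  assume a: "\<forall>x\<in>S. \<forall>y\<in>S. R x y = R' x y" "set (F a) \<subseteq> S" "set (F b) \<subseteq> S"
  have m1: "lexmax R C (F a) = lexmax R' C (F a)" for C using lexmax_cong[OF a(1) a(2)] .
  have m2: "lexmax R C (F b) = lexmax R' C (F b)" for C using lexmax_cong[OF a(1) a(3)] .
  have "lx R C D = lx R' C D" if "lexmax R C (F a)" "lexmax R D (F b)" for C D
  proof (rule lx_cong[OF a(1)])
    show "set C \<subseteq> S" using that(1) subseq_set a(2) unfolding lexmax_def by blast
    show "set D \<subseteq> S" using that(2) subseq_set a(3) unfolding lexmax_def by blast
  qed
  then show ?thesis unfolding extc_def lexle_lx m1 m2 by blast
qed

lemma subseq_single: "subseq C [a] \<Longrightarrow> C = [] \<or> C = [a]"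
proof -
  assume s: "subseq C [a]"
  then have "length C \<le> 1" using list_emb_length by fastforce
  then consider "C = []" | c where "C = [c]" by (cases C) auto
  then show ?thesis
  proof cases
    case 2 then have "c = a" using s subseq_singleton_left[of c "[a]"] by simp
    then show ?thesis using 2 by simp
  qed simp
qed

lemma ext_single: "tp R \<Longrightarrow> F a = [a] \<Longrightarrow> F b = [b] \<Longrightarrow> extc R F a b = R a b"
proof -
  assume tp: "tp R" and Fa: "F a = [a]" and Fb: "F b = [b]"
  have lm: "lexmax R C [c] \<longleftrightarrow> C = [c]" for c C
  proof
    assume "lexmax R C [c]"
    then have "subseq C [c]" "lx R [c] C" unfolding lexmax_def lexle_lx by auto
    then show "C = [c]" using subseq_single by fastforce
  next
    assume "C = [c]"
    then show "lexmax R C [c]" unfolding lexmax_def lexle_lx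
      using subseq_single lx_refl[OF tp] by fastforce
  qed
  show ?thesis unfolding extc_def Fa Fb lm lexle_lx by (auto simp: pless_def psim_def)
qed

lemma splitw_ne: "splitw n A \<noteq> []"
  by (induction A) (auto split: list.split)

lemma splitw_notin: "n \<notin> set A \<Longrightarrow> splitw n A = [A]"
  by (induction A) auto

lemma splitw_set: "P \<in> set (splitw n A) \<Longrightarrow> x \<in> set P \<Longrightarrow> x \<in> set A \<and> x \<noteq> n"
proof (induction A arbitrary: P)
  case Nil then show ?case by simp
next
  case (Cons a A)
  show ?case
  proof (cases "a = n")
    case True then show ?thesis using Cons by auto
  next
    case False
    then obtain y ys where s: "splitw n A = y # ys" using splitw_ne by (cases "splitw n A") auto
    have ih: "x \<in> set A \<and> x \<noteq> n" if "Q \<in> set (y#ys)" "x \<in> set Q" for Q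
      using Cons.IH that s by metis
    have sp: "splitw n (a#A) = (a#y)#ys" using False s by simp
    show ?thesis
    proof (cases "P = a#y")
      case True
      then have "x = a \<or> x \<in> set y" using Cons.prems(2) by simp
      then show ?thesis using ih[of y] False by auto
    next
      case False
      then have "P \<in> set ys" using Cons.prems(1) sp by simp
      then show ?thesis using ih[of P] Cons.prems(2) by simp
    qed
  qed
qed

fun cmp :: "nat \<Rightarrow> nat \<Rightarrow> nat list \<Rightarrow> nat list \<Rightarrow> bool" where
  "cmp 0 n A B = True"
| "cmp (Suc k) n A B = extc (cmp k (Suc n)) (splitw n) A B"

declare cmp.simps(2)[simp del]

lemma tp_cmp: "tp (cmp k n)"
proof (induction k arbitrary: n)
  case 0 then show ?case by (simp add: tp_def)
next
  case (Suc k)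
  have "cmp (Suc k) n = extc (cmp k (Suc n)) (splitw n)" by (simp add: fun_eq_iff cmp.simps)
  then show ?case using tp_ext Suc by metis
qed

lemma L1: "\<forall>x\<in>set (A@B). Suc n \<le> x \<Longrightarrow> cmp (Suc k) n A B = cmp k (Suc n) A B"
proof -
  assume a: "\<forall>x\<in>set (A@B). Suc n \<le> x"
  have nA: "n \<notin> set A"
  proof
    assume "n \<in> set A" then have "n \<in> set (A@B)" by simp
    then show False using a by fastforce
  qed
  have nB: "n \<notin> set B"
  proof
    assume "n \<in> set B" then have "n \<in> set (A@B)" by simp
    then show False using a by fastforce
  qed
  have sA: "splitw n A = [A]" using splitw_notin[OF nA] .
  have sB: "splitw n B = [B]" using splitw_notin[OF nB] .
  have tpc: "tp (cmp k (Suc n))" by (rule tp_cmp)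
  have "extc (cmp k (Suc n)) (splitw n) A B = cmp k (Suc n) A B"
    by (rule ext_single[OF tpc sA sB])
  then show ?thesis by (simp add: cmp.simps(2))
qed

lemma L2: "\<forall>x\<in>set (A@B). n \<le> x \<and> x < n + k \<Longrightarrow> cmp (Suc k) n A B = cmp k n A B"
proof (induction k arbitrary: n A B)
  case 0
  then have "\<forall>x\<in>set A. n \<le> x \<and> x < n" "\<forall>x\<in>set B. n \<le> x \<and> x < n" by simp_all
  then have "A = []" "B = []" by (metis last_in_set leD)+
  then show ?case using tp_refl[OF tp_cmp, of "Suc 0" n "[]"] by simp
next
  case (Suc k)
  let ?S = "set (splitw n A) \<union> set (splitw n B)"
  have "\<forall>P\<in>?S. \<forall>Q\<in>?S. cmp (Suc k) (Suc n) P Q = cmp k (Suc n) P Q"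
  proof (intro ballI)
    fix P Q assume "P \<in> ?S" "Q \<in> ?S"
    have "Suc n \<le> x \<and> x < Suc n + k" if "x \<in> set (P@Q)" for x
    proof -
      have "x \<in> set (A@B) \<and> x \<noteq> n" using that \<open>P \<in> ?S\<close> \<open>Q \<in> ?S\<close> splitw_set[of _ n _ x] by auto
      then show ?thesis using Suc.prems by fastforce
    qed
    then have "\<forall>x\<in>set (P@Q). Suc n \<le> x \<and> x < Suc n + k" by blast
    then show "cmp (Suc k) (Suc n) P Q = cmp k (Suc n) P Q" using Suc.IH by blast
  qed
  note agree = this
  have e1: "cmp (Suc (Suc k)) n A B = extc (cmp (Suc k) (Suc n)) (splitw n) A B" by (rule cmp.simps(2))
  have e2: "cmp (Suc k) n A B = extc (cmp k (Suc n)) (splitw n) A B" by (rule cmp.simps(2))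
  show ?case unfolding e1 e2 by (rule ext_cong[OF agree]) auto
qed

lemma C1: "\<forall>x\<in>set (A@B). n \<le> x \<Longrightarrow> cmp k n A B = cmp (k+n) 0 A B"
proof (induction n arbitrary: k)
  case 0 then show ?case by simp
next
  case (Suc n)
  have "cmp k (Suc n) A B = cmp (Suc k) n A B" using L1 Suc.prems by metis
  also have "\<dots> = cmp (Suc k + n) 0 A B"
  proof (rule Suc.IH)
    show "\<forall>x\<in>set (A@B). n \<le> x"
    proof
      fix x assume "x \<in> set (A@B)"
      then have "Suc n \<le> x" using Suc.prems by blast
      then show "n \<le> x" by simp
    qed
  qed
  finally show ?case by simp
qed

lemma C2: "\<forall>x\<in>set (A@B). x < k \<Longrightarrow> cmp k 0 A B = cmp (k+j) 0 A B"
proof (induction j)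
  case 0 then show ?case by simp
next
  case (Suc j)
  have "\<forall>x\<in>set (A@B). 0 \<le> x \<and> x < 0 + (k+j)"
  proof
    fix x assume "x \<in> set (A@B)"
    then have "x < k" using Suc.prems by blast
    then show "0 \<le> x \<and> x < 0 + (k+j)" by simp
  qed
  then have "cmp (Suc (k+j)) 0 A B = cmp (k+j) 0 A B" using L2[of A B 0 "k+j"] by blast
  moreover have "k + Suc j = Suc (k + j)" by simp
  ultimately show ?case using Suc.IH Suc.prems by metis
qed

lemma CANON: "\<forall>x\<in>set (A@B). n \<le> x \<and> x < n + k \<Longrightarrow> \<forall>x\<in>set (A@B). x < K
   \<Longrightarrow> cmp k n A B = cmp K 0 A B"
proof -
  assume a: "\<forall>x\<in>set (A@B). n \<le> x \<and> x < n + k" and b: "\<forall>x\<in>set (A@B). x < K"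
  have a0: "\<forall>x\<in>set (A@B). n \<le> x"
  proof
    fix x assume "x \<in> set (A@B)"
    then show "n \<le> x" using a by blast
  qed
  have 1: "cmp k n A B = cmp (k+n) 0 A B" using C1[OF a0] .
  have a2: "\<forall>x\<in>set (A@B). x < k + n"
  proof
    fix x assume "x \<in> set (A@B)"
    then have "x < n + k" using a by blast
    then show "x < k + n" by simp
  qed
  show ?thesis
  proof (cases "K \<le> k + n")
    case True
    then have "K + (k+n-K) = k + n" by simp
    then show ?thesis using 1 C2[OF b, of "k+n-K"] by metis
  next
    case False
    then have "k + n + (K-(k+n)) = K" by simp
    then show ?thesis using 1 C2[OF a2, of "K-(k+n)"] by metis
  qed
qed


lemma mm: "x \<in> set L \<Longrightarrow> Min (set L) \<le> x \<and> x \<le> Max (set L)"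
  by (simp add: Max_ge Min_le)

lemma wrange_ne: "L \<noteq> [] \<Longrightarrow> wrange L = Max (set L) - Min (set L)"
  by (simp add: wrange_def)

lemma wle_aux_Nil: "wle_aux d [] []"
  by (cases d) auto

lemma wle_aux_Suc: assumes "A @ B \<noteq> []" shows
  "wle_aux (Suc d) A B = extc (wle_aux d) (splitw (Min (set (A@B)))) A B"
proof -
  have "\<not> (A = [] \<and> B = [])" using assms by simp
  then show ?thesis by (auto simp: extc_def Let_def)
qed

lemma L3: "A @ B \<noteq> [] \<Longrightarrow> wrange (A@B) < d \<Longrightarrow> wle_aux d A B = cmp d (Min (set (A@B))) A B"
proof (induction d arbitrary: A B)
  case 0 then show ?case by simp
next
  case (Suc d)
  define n where "n = Min (set (A@B))"
  define M where "M = Max (set (A@B))"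
  have ne: "set (A@B) \<noteq> {}" using Suc.prems(1) by simp
  have Mb: "M \<le> n + d" using Suc.prems(2) wrange_ne[OF Suc.prems(1)] unfolding n_def M_def by simp
  let ?S = "set (splitw n A) \<union> set (splitw n B)"
  have agree: "\<forall>P\<in>?S. \<forall>Q\<in>?S. wle_aux d P Q = cmp d (Suc n) P Q"
  proof (intro ballI)
    fix P Q assume PS: "P \<in> ?S" and QS: "Q \<in> ?S"
    have el: "n < x \<and> x \<le> M" if "x \<in> set (P@Q)" for x
    proof -
      have "x \<in> set (A@B) \<and> x \<noteq> n" using that PS QS splitw_set[of _ n _ x] by auto
      then have "n \<le> x" "x \<le> M" "x \<noteq> n" using mm[of x "A@B"] unfolding n_def M_def by auto
      then show ?thesis by simp
    qed
    show "wle_aux d P Q = cmp d (Suc n) P Q"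
    proof (cases "P @ Q = []")
      case True
      then have "P = []" "Q = []" by auto
      then show ?thesis using wle_aux_Nil tp_refl[OF tp_cmp] by simp
    next
      case False
      define m where "m = Min (set (P@Q))"
      define M' where "M' = Max (set (P@Q))"
      have ne': "set (P@Q) \<noteq> {}" using False by simp
      have mM: "m \<in> set (P@Q)" "M' \<in> set (P@Q)" unfolding m_def M'_def
        using Min_in[OF List.finite_set ne'] Max_in[OF List.finite_set ne'] by auto
      have "n < m" "M' \<le> M" using el mM by auto
      have "m \<le> M'" using mm[OF mM(1)] unfolding m_def M'_def by simp
      moreover have "wrange (P@Q) = M' - m" using wrange_ne[OF False] unfolding m_def M'_def by simp
      ultimately have wr: "wrange (P@Q) < d" using \<open>n < m\<close> \<open>M' \<le> M\<close> Mb by arith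
      have ih: "wle_aux d P Q = cmp d m P Q" using Suc.IH[OF False wr] unfolding m_def .
      have r1: "\<forall>x\<in>set (P@Q). m \<le> x \<and> x < m + d"
      proof
        fix x assume x: "x \<in> set (P@Q)"
        have "m \<le> x" "x \<le> M'" using mm[OF x] unfolding m_def M'_def by auto
        moreover have "M' - m < d" using wr wrange_ne[OF False] unfolding m_def M'_def by simp
        ultimately show "m \<le> x \<and> x < m + d" by simp
      qed
      have r2: "\<forall>x\<in>set (P@Q). Suc n \<le> x \<and> x < Suc n + d"
      proof
        fix x assume x: "x \<in> set (P@Q)"
        then show "Suc n \<le> x \<and> x < Suc n + d" using el[OF x] Mb by simp
      qed
      have r3: "\<forall>x\<in>set (P@Q). x < Suc n + d" using r2 by blast
      show ?thesis using ih CANON[OF r1 r3] CANON[OF r2 r3] by simp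
    qed
  qed
  have "wle_aux (Suc d) A B = extc (wle_aux d) (splitw n) A B"
    unfolding n_def by (rule wle_aux_Suc[OF Suc.prems(1)])
  also have "\<dots> = extc (cmp d (Suc n)) (splitw n) A B"
    by (rule ext_cong[OF agree]) auto
  also have "\<dots> = cmp (Suc d) n A B" by (simp add: cmp.simps(2))
  finally show ?case unfolding n_def .
qed

lemma W: "\<forall>x\<in>set (A@B). x < K \<Longrightarrow> wle A B = cmp K 0 A B"
proof (cases "A @ B = []")
  case True
  then have "A = []" "B = []" by auto
  then show ?thesis using tp_refl[OF tp_cmp] by (simp add: wle_def wrange_def)
next
  case False
  assume K: "\<forall>x\<in>set (A@B). x < K"
  define n where "n = Min (set (A@B))"
  have "wle A B = wle_aux (Suc (wrange (A@B))) A B" by (simp add: wle_def)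
  also have "\<dots> = cmp (Suc (wrange (A@B))) n A B" unfolding n_def by (rule L3[OF False]) simp
  also have "\<dots> = cmp K 0 A B"
  proof (rule CANON[OF _ K])
    show "\<forall>x\<in>set (A@B). n \<le> x \<and> x < n + Suc (wrange (A@B))"
    proof
      fix x assume x: "x \<in> set (A@B)"
      show "n \<le> x \<and> x < n + Suc (wrange (A@B))"
        using mm[OF x] wrange_ne[OF False] unfolding n_def by simp
    qed
  qed
  finally show ?thesis .
qed

lemma bigK: "\<forall>x\<in>set L. x < Suc (Max (insert 0 (set L)))"
  by (simp add: le_imp_less_Suc)

lemma tp_wle: "tp wle"
  unfolding tp_def
proof (intro conjI allI impI)
  fix x y z
  assume xy: "wle x y" and yz: "wle y z"
  define K where "K = Suc (Max (insert 0 (set (x@y@z))))"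
  have k: "\<forall>a\<in>set (x@y@z). a < K" unfolding K_def by (rule bigK)
  have "cmp K 0 x y" "cmp K 0 y z" using xy yz W k by auto
  then have "cmp K 0 x z" using tp_trans[OF tp_cmp] by blast
  then show "wle x z" using W k by auto
next
  fix x y
  define K where "K = Suc (Max (insert 0 (set (x@y))))"
  have k: "\<forall>a\<in>set (x@y). a < K" unfolding K_def by (rule bigK)
  have "cmp K 0 x y \<or> cmp K 0 y x" using tp_total[OF tp_cmp] by blast
  then show "wle x y \<or> wle y x" using W k by auto
qed


locale G =
  fixes R :: "'a \<Rightarrow> 'a \<Rightarrow> bool" and A :: "nat \<Rightarrow> 'a" and n :: nat
  assumes tpR: "tp R"
begin

definition I where "I a u \<longleftrightarrow> sorted_wrt (<) u \<and> (\<forall>x\<in>set u. a < x \<and> x \<le> n)"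
definition fa where "fa a = Min {f. a < f \<and> f \<le> n \<and> (\<forall>l. a < l \<and> l \<le> n \<longrightarrow> R (A l) (A f))}"
definition K where "K a s \<longleftrightarrow> I a s \<and>
   (\<forall>u. I a u \<longrightarrow> lx R (map A u) (map A s) \<and> (lx R (map A s) (map A u) \<longrightarrow> u = s))"

lemma fa_props:
  assumes "a < n"
  shows "a < fa a" "fa a \<le> n" "\<forall>l. a < l \<and> l \<le> n \<longrightarrow> R (A l) (A (fa a))"
    "\<forall>u. a < u \<and> u \<le> n \<and> R (A (fa a)) (A u) \<longrightarrow> fa a \<le> u"
proof -
  let ?S = "{f. a < f \<and> f \<le> n \<and> (\<forall>l. a < l \<and> l \<le> n \<longrightarrow> R (A l) (A f))}"
  have tp': "tp (\<lambda>i j. R (A i) (A j))" using tpR unfolding tp_def by blast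
  have "{a<..n} \<noteq> {}" using assms by auto
  then obtain m where m: "m \<in> {a<..n}" "\<forall>x\<in>{a<..n}. R (A x) (A m)"
    using fin_max[OF tp', of "{a<..n}"] by auto
  then have "m \<in> ?S" by auto
  hence ne: "?S \<noteq> {}" by blast
  have fin: "finite ?S" by (rule finite_subset[of _ "{..n}"]) auto
  have faS: "fa a \<in> ?S" unfolding fa_def using Min_in[OF fin ne] .
  then show "a < fa a" "fa a \<le> n" "\<forall>l. a < l \<and> l \<le> n \<longrightarrow> R (A l) (A (fa a))" by auto
  show "\<forall>u. a < u \<and> u \<le> n \<and> R (A (fa a)) (A u) \<longrightarrow> fa a \<le> u"
  proof (intro allI impI)
    fix u assume u: "a < u \<and> u \<le> n \<and> R (A (fa a)) (A u)"
    have "\<forall>l. a < l \<and> l \<le> n \<longrightarrow> R (A l) (A u)"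
      using faS u tp_trans[OF tpR] by blast
    then have "u \<in> ?S" using u by blast
    then show "fa a \<le> u" unfolding fa_def using Min_le[OF fin] by blast
  qed
qed

lemma K_uniq: "K a s \<Longrightarrow> K a s' \<Longrightarrow> s' = s"
  unfolding K_def by blast

lemma Q: "a \<le> n \<Longrightarrow> \<exists>s. K a s \<and> (a = n \<longrightarrow> s = []) \<and> (a < n \<longrightarrow> (\<exists>s''. K (fa a) s'' \<and> s = fa a # s''))"
proof (induction "n - a" arbitrary: a rule: less_induct)
  case less
  show ?case
  proof (cases "a = n")
    case True
    have "I n u \<Longrightarrow> u = []" for u
      unfolding I_def by (cases u) auto
    note e = this
    have "K n []" unfolding K_def
    proof (intro conjI allI impI)
      show "I n []" by (simp add: I_def)
      fix u assume "I n u"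
      then have "u = []" by (rule e)
      then show "lx R (map A u) (map A [])" "u = []" by simp_all
    qed
    then have "K a []" using True by simp
    then show ?thesis using True by blast
  next
    case False
    then have an: "a < n" using less.prems by simp
    define f where "f = fa a"
    note fp = fa_props[OF an, folded f_def]
    have "n - f < n - a" using fp by simp
    then obtain T where KT: "K f T" and T1: "f = n \<longrightarrow> T = []"
      and T2: "f < n \<longrightarrow> (\<exists>T''. K (fa f) T'' \<and> T = fa f # T'')"
      using less.hyps[of f] fp by blast
    have IT: "I f T" using KT unfolding K_def by blast
    have Is: "I a (f#T)" using IT fp unfolding I_def by auto
    have main: "lx R (map A u) (map A (f#T)) \<and> (lx R (map A (f#T)) (map A u) \<longrightarrow> u = f#T)"
      if Iu: "I a u" for u
    proof (cases u)
      case Nil then show ?thesis by simp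
    next
      case (Cons u1 u')
      have u1: "a < u1" "u1 \<le> n" and u'gt: "\<forall>y\<in>set u'. u1 < y \<and> y \<le> n" and su': "sorted_wrt (<) u'"
        using Iu unfolding Cons I_def by auto
      have Rle: "R (A u1) (A f)" using fp(3) u1 by blast
      show ?thesis
      proof (cases "R (A f) (A u1)")
        case False
        then show ?thesis using Rle unfolding Cons by (simp add: pless_def psim_def)
      next
        case True
        have ps: "psim R (A u1) (A f)" "psim R (A f) (A u1)" using True Rle by (auto simp: psim_def)
        have npl: "\<not> pless R (A f) (A u1)" "\<not> pless R (A u1) (A f)" using True Rle by (auto simp: pless_def)
        have fu1: "f \<le> u1" using fp(4) u1 True by blast
        have Iu': "I f u'" using u'gt su' fu1 unfolding I_def by auto
        have c1: "lx R (map A u') (map A T)" and c2: "lx R (map A T) (map A u') \<longrightarrow> u' = T"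
          using KT Iu' unfolding K_def by blast+
        show ?thesis
        proof (cases "u1 = f")
          case True
          then show ?thesis using c1 c2 ps npl unfolding Cons by simp
        next
          case False
          then have fl: "f < u1" using fu1 by simp
          have "\<not> lx R (map A (f#T)) (map A u)"
          proof
            assume "lx R (map A (f#T)) (map A u)"
            then have "lx R (map A T) (map A u')" using npl unfolding Cons by simp
            then have uT: "u' = T" using c2 by blast
            have "f < n" using fl u1 by simp
            then obtain T'' where T'': "T = fa f # T''" using T2 by blast
            note fp2 = fa_props[OF \<open>f < n\<close>]
            have "R (A (fa f)) (A f)" using fp(3) fp2(1,2) fp(1) by auto
            then have "R (A (fa f)) (A u1)" using True tp_trans[OF tpR] by blast
            then have "fa f \<le> u1" using fp2(4) fl u1 by blast
            moreover have "u1 < fa f" using u'gt uT T'' by simp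
            ultimately show False by simp
          qed
          then show ?thesis using c1 ps unfolding Cons by simp
        qed
      qed
    qed
    have "K a (f#T)" unfolding K_def using Is main by blast
    then show ?thesis using KT an f_def by blast
  qed
qed

lemma maximal_iff: assumes "K 0 s"
  shows "(I 0 s' \<and> (\<forall>v. I 0 v \<longrightarrow> lx R (map A v) (map A s'))) \<longleftrightarrow> s' = s"
proof
  assume "I 0 s' \<and> (\<forall>v. I 0 v \<longrightarrow> lx R (map A v) (map A s'))"
  moreover have "I 0 s' \<longrightarrow> lx R (map A s) (map A s') \<longrightarrow> s' = s" using assms unfolding K_def by blast
  moreover have "I 0 s" using assms unfolding K_def by blast
  ultimately show "s' = s" by blast
next
  assume "s' = s"
  then show "I 0 s' \<and> (\<forall>v. I 0 v \<longrightarrow> lx R (map A v) (map A s'))" using assms unfolding K_def by blast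
qed

lemma link: "(bounded_index_coll n u \<and> lexmax R (map A u) (map A [1..<Suc n]))
   \<longleftrightarrow> (I 0 u \<and> (\<forall>v. I 0 v \<longrightarrow> lx R (map A v) (map A u)))"
proof -
  have one: "(1 \<le> x) = (0 < x)" for x :: nat by arith
  have b: "bounded_index_coll n u \<longleftrightarrow> I 0 u" for u
    unfolding bounded_index_coll_def I_def by (simp only: one)
  have sub: "subseq (map A v) (map A [1..<Suc n])" if "I 0 v" for v
  proof (rule subseq_map, rule sorted_subset_imp_subseq)
    show "set v \<subseteq> set [1..<Suc n]"
    proof
      fix x assume "x \<in> set v"
      then have "0 < x \<and> x \<le> n" using that unfolding I_def by blast
      then show "x \<in> set [1..<Suc n]" unfolding set_upt atLeastLessThan_iff by arith
    qed
    show "sorted_wrt (<) v" using that unfolding I_def by blast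
    show "sorted_wrt (\<le>) [1..<Suc n]" by (rule sorted_upt)
  qed
  have conv: "\<exists>v. I 0 v \<and> D = map A v" if sD: "subseq D (map A [1..<Suc n])" for D
  proof -
    obtain N where N: "D = nths (map A [1..<Suc n]) N" using subseq_conv_nths[THEN iffD1, OF sD] by (rule exE)
    define v where "v = nths [1..<Suc n] N"
    have Dv: "D = map A v" unfolding N v_def by (rule nths_map)
    have "sorted [1..<Suc n]" by (rule sorted_upt)
    then have "sorted v" unfolding v_def by (rule sorted_nths)
    have "distinct v" unfolding v_def by (rule distinct_nthsI) (rule distinct_upt)
    have sw: "sorted_wrt (<) v" using \<open>sorted v\<close> \<open>distinct v\<close> by (simp only: strict_sorted_iff)
    have rg: "\<forall>x\<in>set v. 0 < x \<and> x \<le> n"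
    proof
      fix x assume "x \<in> set v"
      then have "x \<in> set (nths [1..<Suc n] N)" unfolding v_def .
      then have "x \<in> set [1..<Suc n]" by (rule subsetD[OF set_nths_subset])
      then have "1 \<le> x \<and> x < Suc n" unfolding set_upt atLeastLessThan_iff .
      then show "0 < x \<and> x \<le> n" by arith
    qed
    have "I 0 v" unfolding I_def using sw rg by (rule conjI)
    then show ?thesis using Dv by (intro exI conjI)
  qed
  show ?thesis
  proof
    assume "bounded_index_coll n u \<and> lexmax R (map A u) (map A [1..<Suc n])"
    then have "I 0 u" "\<forall>D. subseq D (map A [1..<Suc n]) \<longrightarrow> lx R D (map A u)"
      unfolding b lexmax_def lexle_lx by simp_all
    then show "I 0 u \<and> (\<forall>v. I 0 v \<longrightarrow> lx R (map A v) (map A u))" using sub by simp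
  next
    assume a: "I 0 u \<and> (\<forall>v. I 0 v \<longrightarrow> lx R (map A v) (map A u))"
    have "\<forall>D. subseq D (map A [1..<Suc n]) \<longrightarrow> lx R D (map A u)"
    proof (intro allI impI)
      fix D assume "subseq D (map A [1..<Suc n])"
      then obtain v where v: "I 0 v" "D = map A v" using conv by metis
      then show "lx R D (map A u)" using a by simp
    qed
    then show "bounded_index_coll n u \<and> lexmax R (map A u) (map A [1..<Suc n])"
      unfolding b lexmax_def lexle_lx using a sub by simp
  qed
qed

end


theorem lemma1:
  fixes n :: nat and A :: "nat \<Rightarrow> nat list"
  assumes "n \<ge> 1"
  shows "\<exists>s. (\<forall>s'. maximal_for n A s' \<longleftrightarrow> s' = s) \<and>
           (\<forall>t :: nat \<Rightarrow> nat.
              (t 0 = 0 \<and>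
               (\<forall>k. t (Suc k) =
                  (if t k \<noteq> n
                   then Min {f. t k < f \<and> f \<le> n \<and> (\<forall>l. t k < l \<and> l \<le> n \<longrightarrow> wle (A l) (A f))}
                   else n)))
              \<longrightarrow> (\<exists>f\<ge>1. t f = n) \<and> s = map t [1..<Suc (LEAST f. 1 \<le> f \<and> t f = n)])"
proof -
  interpret g: G wle A n by unfold_locales (rule tp_wle)
  obtain s where Ks: "g.K 0 s" using g.Q[of 0] by blast
  have p1: "\<forall>s'. maximal_for n A s' \<longleftrightarrow> s' = s"
  proof
    fix s'
    have "maximal_for n A s' \<longleftrightarrow> (g.I 0 s' \<and> (\<forall>v. g.I 0 v \<longrightarrow> lx wle (map A v) (map A s')))"
      unfolding maximal_for_def by (rule g.link)
    also have "\<dots> \<longleftrightarrow> s' = s" by (rule g.maximal_iff[OF Ks])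
    finally show "maximal_for n A s' \<longleftrightarrow> s' = s" .
  qed
  have p2: "(\<exists>f\<ge>1. t f = n) \<and> s = map t [1..<Suc (LEAST f. 1 \<le> f \<and> t f = n)]"
    if t0: "t 0 = 0" and tS: "\<forall>k. t (Suc k) =
                  (if t k \<noteq> n
                   then Min {f. t k < f \<and> f \<le> n \<and> (\<forall>l. t k < l \<and> l \<le> n \<longrightarrow> wle (A l) (A f))}
                   else n)" for t
  proof -
    have fa_eq: "t (Suc k) = g.fa (t k)" if "t k \<noteq> n" for k
      using tS that unfolding g.fa_def by simp
    have tn: "t (Suc k) = n" if "t k = n" for k
      using tS that by simp
    have bnd: "t k \<le> n \<and> (t k = n \<or> k \<le> t k)" for k
    proof (induction k)
      case 0 then show ?case using t0 by simp
    next
      case (Suc k)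
      show ?case
      proof (cases "t k = n")
        case True then show ?thesis using tn by simp
      next
        case False
        then have lt: "t k < n" using Suc.IH by arith
        have "t k < g.fa (t k)" "g.fa (t k) \<le> n" using g.fa_props(1,2)[OF lt] by simp_all
        moreover have "t (Suc k) = g.fa (t k)" using fa_eq[OF False] .
        ultimately show ?thesis using Suc.IH False by arith
      qed
    qed
    have tnn: "t n = n" using bnd[of n] by arith
    have ex: "\<exists>f\<ge>1. t f = n" using tnn assms by blast
    define m where "m = (LEAST f. 1 \<le> f \<and> t f = n)"
    have m: "1 \<le> m \<and> t m = n" unfolding m_def
      by (rule LeastI_ex) (use ex in blast)
    have nn: "t j \<noteq> n" if "j < m" for j
    proof (cases "j = 0")
      case True then show ?thesis using t0 assms by simp
    next
      case False
      show ?thesis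
      proof
        assume "t j = n"
        then have "m \<le> j" unfolding m_def using False by (intro Least_le) simp
        then show False using that by simp
      qed
    qed
    have Kn: "g.K n []" using g.Q[of n] by simp
    have T2: "i \<le> m \<Longrightarrow> g.K (t (m - i)) (map t [Suc (m - i)..<Suc m])" for i
    proof (induction i)
      case 0 then show ?case using m Kn by simp
    next
      case (Suc i)
      define j where "j = m - Suc i"
      have jm: "j < m" "m - i = Suc j" using Suc.prems unfolding j_def by arith+
      have tj: "t j \<noteq> n" by (rule nn[OF jm(1)])
      have tjl: "t j < n" using bnd[of j] tj by arith
      obtain s0 s'' where s0: "g.K (t j) s0" "g.K (g.fa (t j)) s''" "s0 = g.fa (t j) # s''"
        using g.Q[of "t j"] tjl by auto
      have ih: "g.K (t (Suc j)) (map t [Suc (Suc j)..<Suc m])"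
        using Suc.IH Suc.prems jm by simp
      have s''e: "s'' = map t [Suc (Suc j)..<Suc m]"
        using g.K_uniq[OF ih] s0(2) fa_eq[OF tj] by (simp del: upt_Suc)
      have "Suc j < Suc m" using jm(1) by simp
      then have up: "[Suc j..<Suc m] = Suc j # [Suc (Suc j)..<Suc m]" by (rule upt_conv_Cons)
      have "s0 = map t [Suc j..<Suc m]" unfolding up list.map s0(3) s''e fa_eq[OF tj] ..
      then show ?case using s0(1) unfolding j_def[symmetric] by simp
    qed
    have "g.K (t 0) (map t [1..<Suc m])" using T2[of m] by simp
    then have "g.K 0 (map t [1..<Suc m])" using t0 by simp
    then have "map t [1..<Suc m] = s" using g.K_uniq[OF Ks] by simp
    then show ?thesis using ex unfolding m_def by simp
  qed
  show ?thesis using p1 p2 by blast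
qed

end
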